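(* Let $\mathcal{X}=[0,1]^2$ and let $\mathcal{G}$ be the class of monotone allocations. Fix $M<\infty$, $\kappa\in(0,1/2)$, $A>0$, assume unconfoundedness, and let $\mathcal{P}_r$ be the set of distributions under which $X$ has a Lebesgue density on $[0,1]^2$ bounded above by $A$. Let $\hat G_{EWM}\in\arg\max_{G\in\mathcal{G}}W_n(G)$ be the empirical welfare maximization rule over $\mathcal{G}$. Then $$\sup_{P\in\mathcal{P}_r\cap\mathcal{P}(M,\kappa)}E_{P^n}\big[W^*_{\mathcal{G}}-W(\hat G_{EWM})\big]=O\big(n^{-1/4}\big).$$
   Context: Potential outcomes $Y(0),Y(1)\in\mathbb{R}$, treatment $D\in\{0,1\}$, covariate $X=(X_1,X_2)\in[0,1]^2$; observed $Y=Y(1)D+Y(0)(1-D)$; $P$ is the distribution of $(Y,D,X)$, data i.i.d. from $P$. Unconfoundedness: $(Y(1),Y(0))\perp D\mid X$. $e(x)=E_P[D\mid X=x]$ (known). $\mathcal{P}(M,\kappa)$: distributions with support of $Y$ in $[-M/2,M/2]$ and $e(x)\in[\kappa,1-\kappa]$ for all $x$. Welfare $W(G)=E_P[(\frac{YD}{e(X)}-\frac{Y(1-D)}{1-e(X)})\mathbf{1}\{X\in G\}]$, $W^*_{\mathcal{G}}=\sup_{G\in\mathcal{G}}W(G)$. Monotone allocations: $\mathcal{G}=\{\{x\in[0,1]^2:x_2\le f(x_1)\}:f:[0,1]\to[0,1]\text{ non-increasing}\}$. $W_n(G)=\frac1n\sum_i\big(\frac{Y_iD_i}{e(X_i)}-\frac{Y_i(1-D_i)}{1-e(X_i)}\big)\mathbf{1}\{X_i\in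 G\}$. The maximizer is assumed to exist. *)

theory Defs
  imports "HOL-Probability.Probability"
begin

text \<open>An observation is a triple (Y, D, X) with outcome Y, treatment D (True = treated)
  and covariate X = (X1, X2).\<close>
type_synonym obs = "real \<times> bool \<times> (real \<times> real)"

definition obsY :: "obs \<Rightarrow> real" where "obsY z = fst z"
definition obsD :: "obs \<Rightarrow> bool" where "obsD z = fst (snd z)"
definition obsX :: "obs \<Rightarrow> real \<times> real" where "obsX z = snd (snd z)"

definition unit_square :: "(real \<times> real) set" where
  "unit_square = {0..1} \<times> {0..1}"

definition score :: "(real \<times> real \<Rightarrow> real) \<Rightarrow> obs \<Rightarrow> real" where
  "score e z = obsY z * of_bool (obsD z) / e (obsX z)
             - obsY z * (1 - of_bool (obsD z)) / (1 - e (obsX z))"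

definition welfare :: "obs measure \<Rightarrow> (real \<times> real \<Rightarrow> real) \<Rightarrow> (real \<times> real) set \<Rightarrow> real" where
  "welfare P e G = (\<integral>z. score e z * indicator G (obsX z) \<partial>P)"

definition emp_welfare :: "nat \<Rightarrow> (real \<times> real \<Rightarrow> real) \<Rightarrow> (nat \<Rightarrow> obs) \<Rightarrow> (real \<times> real) set \<Rightarrow> real" where
  "emp_welfare n e z G = (1 / real n) * (\<Sum>i<n. score e (z i) * indicator G (obsX (z i)))"

definition monotone_allocs :: "(real \<times> real) set set" where
  "monotone_allocs = {{x \<in> unit_square. snd x \<le> f (fst x)} | f.
      (\<forall>a\<in>{0..1}. f a \<in> {0..1}) \<and> (\<forall>a\<in>{0..1}. \<forall>b\<in>{0..1}. a \<le> b \<longrightarrow> f b \<le> f a)}"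

definition welfare_star :: "obs measure \<Rightarrow> (real \<times> real \<Rightarrow> real) \<Rightarrow> real" where
  "welfare_star P e = Sup (welfare P e ` monotone_allocs)"

text \<open>P is in P(M,kappa) intersected with P_r, with e a version of the propensity
  score E_P[D | X = x].\<close>
definition admissible :: "real \<Rightarrow> real \<Rightarrow> real \<Rightarrow> obs measure \<Rightarrow> (real \<times> real \<Rightarrow> real) \<Rightarrow> bool" where
  "admissible M \<kappa> A P e \<longleftrightarrow>
     prob_space P \<and> sets P = sets borel \<and>
     (AE z in P. \<bar>obsY z\<bar> \<le> M / 2) \<and>
     e \<in> borel_measurable borel \<and>
     (\<forall>x\<in>unit_square. \<kappa> \<le> e x \<and> e x \<le> 1 - \<kappa>) \<and>
     (\<forall>B\<in>sets borel. (\<integral>z. of_bool (obsD z) * indicator B (obsX z) \<partial>P)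
                    = (\<integral>z. e (obsX z) * indicator B (obsX z) \<partial>P)) \<and>
     (\<exists>f. f \<in> borel_measurable lborel \<and> (\<forall>x. 0 \<le> f x \<and> f x \<le> A) \<and>
          (\<forall>x. x \<notin> unit_square \<longrightarrow> f x = 0) \<and>
          distr P lborel obsX = density lborel (\<lambda>x. ennreal (f x)))"

definition is_EWM_rule :: "nat \<Rightarrow> (real \<times> real \<Rightarrow> real) \<Rightarrow> ((nat \<Rightarrow> obs) \<Rightarrow> (real \<times> real) set) \<Rightarrow> bool" where
  "is_EWM_rule n e Ghat \<longleftrightarrow>
     (\<forall>z. Ghat z \<in> monotone_allocs \<and>
          (\<forall>G\<in>monotone_allocs. emp_welfare n e z G \<le> emp_welfare n e z (Ghat z)))"

end

theory Submission
  imports Defs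
begin


lemma mX[measurable]: "obsX \<in> borel_measurable borel"
  unfolding obsX_def by (intro borel_measurable_continuous_onI continuous_intros)
lemma mY[measurable]: "obsY \<in> borel_measurable borel"
  unfolding obsY_def by (intro borel_measurable_continuous_onI continuous_intros)
lemma mD[measurable]: "(\<lambda>z. of_bool (obsD z) :: real) \<in> borel_measurable borel"
proof -
  have "continuous_on UNIV (\<lambda>b::bool. of_bool b :: real)"
    by (simp add: continuous_on_discrete)
  then have "continuous_on UNIV ((\<lambda>b::bool. of_bool b :: real) o (\<lambda>z::obs. fst (snd z)))"
    by (intro continuous_on_compose continuous_intros) (auto intro: continuous_on_subset)
  then show ?thesis unfolding obsD_def o_def by (intro borel_measurable_continuous_onI)
qed

lemma mscore[measurable]: "e \<in> borel_measurable borel \<Longrightarrow> score e \<in> borel_measurable borel"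
proof -
  assume e: "e \<in> borel_measurable borel"
  have [measurable]: "(\<lambda>z. e (obsX z)) \<in> borel_measurable borel"
    using measurable_compose[OF mX e] .
  define d where "d = (\<lambda>z. of_bool (obsD z) :: real)"
  have [measurable]: "d \<in> borel_measurable borel" using mD unfolding d_def .
  have "score e = (\<lambda>z. obsY z * d z / e (obsX z) - obsY z * (1 - d z) / (1 - e (obsX z)))"
    unfolding score_def d_def by auto
  also have "\<dots> \<in> borel_measurable borel" by measurable
  finally show ?thesis .
qed



definition ci :: "nat \<Rightarrow> real \<Rightarrow> nat" where
  "ci k t = min (k - 1) (nat \<lfloor>real k * t\<rfloor>)"

definition cell :: "nat \<Rightarrow> nat \<times> nat \<Rightarrow> (real \<times> real) set" where
  "cell k c = {x \<in> unit_square. ci k (fst x) = fst c \<and> ci k (snd x) = snd c}"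

lemma ci_lt: "1 \<le> k \<Longrightarrow> ci k t < k"
  unfolding ci_def by auto

lemma ci_bounds:
  assumes k: "1 \<le> k" and t: "0 \<le> t" "t \<le> 1"
  shows "real (ci k t) \<le> real k * t" "real k * t \<le> real (ci k t) + 1"
proof -
  have kt: "0 \<le> real k * t" using t by auto
  have kt1: "real k * t \<le> real k" using t k by (simp add: mult_left_le)
  have fl: "real (nat \<lfloor>real k * t\<rfloor>) = of_int \<lfloor>real k * t\<rfloor>" using kt by simp
  show "real (ci k t) \<le> real k * t"
    unfolding ci_def using fl kt by (smt (verit) of_int_floor_le of_nat_mono min.cobounded2)
  show "real k * t \<le> real (ci k t) + 1"
  proof (cases "nat \<lfloor>real k * t\<rfloor> \<le> k - 1")
    case True
    then have "ci k t = nat \<lfloor>real k * t\<rfloor>" unfolding ci_def by auto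
    then show ?thesis using fl by (simp add: real_of_int_floor_add_one_ge)
  next
    case False
    then have "ci k t = k - 1" unfolding ci_def by auto
    then show ?thesis using kt1 k by (simp add: of_nat_diff)
  qed
qed

lemma mfst[measurable]: "(fst :: real \<times> real \<Rightarrow> real) \<in> borel_measurable borel"
  by (intro borel_measurable_continuous_onI continuous_intros)
lemma msnd[measurable]: "(snd :: real \<times> real \<Rightarrow> real) \<in> borel_measurable borel"
  by (intro borel_measurable_continuous_onI continuous_intros)

lemma mci[measurable]: "(\<lambda>t::real. ci k t) \<in> borel \<rightarrow>\<^sub>M count_space UNIV"
    unfolding ci_def by measurable

lemma us_meas[measurable]: "unit_square \<in> sets borel" unfolding unit_square_def
    by (metis borel_closed closed_Times closed_atLeastAtMost)

lemma cell_meas[measurable]: "cell k c \<in> sets borel"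
proof -
  have a: "(\<lambda>x::real\<times>real. ci k (fst x)) \<in> borel \<rightarrow>\<^sub>M count_space UNIV"
    using measurable_compose[OF mfst mci] by (simp add: o_def)
  have b: "(\<lambda>x::real\<times>real. ci k (snd x)) \<in> borel \<rightarrow>\<^sub>M count_space UNIV"
    using measurable_compose[OF msnd mci] by (simp add: o_def)
  have "{x::real\<times>real. ci k (fst x) = fst c} \<in> sets borel"
    proof -
    have eq: "{x. ci k (fst x) = fst c} = (\<lambda>x::real\<times>real. ci k (fst x)) -` {fst c} \<inter> space borel" by auto
    show ?thesis unfolding eq by (rule measurable_sets[OF a]) simp
  qed
  moreover have "{x::real\<times>real. ci k (snd x) = snd c} \<in> sets borel"
    proof -
    have eq: "{x. ci k (snd x) = snd c} = (\<lambda>x::real\<times>real. ci k (snd x)) -` {snd c} \<inter> space borel" by auto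
    show ?thesis unfolding eq by (rule measurable_sets[OF b]) simp
  qed
  moreover have "cell k c = unit_square \<inter> {x. ci k (fst x) = fst c} \<inter> {x. ci k (snd x) = snd c}"
    unfolding cell_def by auto
  ultimately show ?thesis by auto
qed

definition Idx :: "nat \<Rightarrow> (nat \<times> nat) set" where "Idx k = {..<k} \<times> {..<k}"

lemma finite_Idx[simp]: "finite (Idx k)" unfolding Idx_def by auto

lemma cell_sub_us: "cell k c \<subseteq> unit_square" unfolding cell_def by auto

lemma cell_partition:
  assumes k: "1 \<le> k" and G: "G \<subseteq> unit_square"
  shows "indicator G x = (\<Sum>c\<in>Idx k. indicator (G \<inter> cell k c) x :: real)"
proof (cases "x \<in> unit_square")
  case False
  then have "x \<notin> G" using G by auto
  moreover have "\<And>c. x \<notin> cell k c" using False cell_sub_us by auto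
  ultimately show ?thesis by (simp add: indicator_def)
next
  case True
  define c0 where "c0 = (ci k (fst x), ci k (snd x))"
  have c0: "c0 \<in> Idx k" unfolding c0_def Idx_def using ci_lt[OF k] by auto
  have "\<And>c. indicator (G \<inter> cell k c) x = (if c = c0 then indicator G x else (0::real))"
    using True unfolding cell_def c0_def by (auto simp: indicator_def)
  then have "(\<Sum>c\<in>Idx k. indicator (G \<inter> cell k c) x :: real) = (\<Sum>c\<in>Idx k. if c = c0 then indicator G x else 0)"
    by simp
  also have "\<dots> = indicator G x" using c0 by (simp add: sum.delta')
  finally show ?thesis by simp
qed

lemma cell_bounds:
  assumes k: "1 \<le> k" and x: "x \<in> cell k (j,l)"
  shows "real j / k \<le> fst x" "fst x \<le> (real j + 1) / k"
        "real l / k \<le> snd x" "snd x \<le> (real l + 1) / k"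
proof -
  have kp: "0 < real k" using k by auto
  from x have us: "0 \<le> fst x" "fst x \<le> 1" "0 \<le> snd x" "snd x \<le> 1" and
    cj: "ci k (fst x) = j" and cl: "ci k (snd x) = l"
    unfolding cell_def unit_square_def by auto
  note b1 = ci_bounds[OF k us(1,2)] and b2 = ci_bounds[OF k us(3,4)]
  show "real j / k \<le> fst x" using b1(1) cj kp by (simp add: divide_le_eq mult.commute)
  show "fst x \<le> (real j + 1) / k" using b1(2) cj kp by (simp add: le_divide_eq mult.commute)
  show "real l / k \<le> snd x" using b2(1) cl kp by (simp add: divide_le_eq mult.commute)
  show "snd x \<le> (real l + 1) / k" using b2(2) cl kp by (simp add: le_divide_eq mult.commute)
qed

lemma cell_cbox:
  assumes k: "1 \<le> k"
  shows "cell k (j,l) \<subseteq> cbox (real j / k, real l / k) ((real j + 1) / k, (real l + 1) / k)"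
  using cell_bounds[OF k] by (force simp: cbox_Pair_eq)

lemma lborel_cbox_cell:
  assumes k: "1 \<le> k"
  shows "emeasure lborel (cbox (real j / k, real l / k) ((real j + 1) / k, (real l + 1) / k)) = ennreal (1 / (real k)^2)"
proof -
  have kp: "0 < real k" using k by auto
  have le1: "real j / k \<le> (real j + 1) / k" "real l / k \<le> (real l + 1) / k"
    using kp by (auto simp: divide_right_mono)
  have "(real j + 1) / k - real j / k = 1 / k" "(real l + 1) / k - real l / k = 1 / k"
    by (simp_all add: diff_divide_distrib[symmetric])
  then show ?thesis using le1
    by (simp add: emeasure_lborel_cbox_eq Basis_prod_def inner_prod_def power2_eq_square ennreal_mult)
qed

definition Bd :: "nat \<Rightarrow> (real \<times> real) set \<Rightarrow> (nat \<times> nat) set" where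
  "Bd k G = {c \<in> Idx k. cell k c \<inter> G \<noteq> {} \<and> \<not> cell k c \<subseteq> G}"

lemma Bd_noncross:
  assumes k: "1 \<le> k"
    and hf: "\<forall>a\<in>{0..1}. \<forall>b\<in>{0..1}. a \<le> b \<longrightarrow> f b \<le> f a"
    and G: "G = {x \<in> unit_square. snd x \<le> f (fst x)}"
    and c1: "(j,l) \<in> Bd k G" and c2: "(j',l') \<in> Bd k G"
    and lt: "j < j'" "l < l'"
  shows False
proof -
  from c1 obtain q where q: "q \<in> cell k (j,l)" "q \<notin> G" unfolding Bd_def by auto
  from c2 obtain p where p: "p \<in> cell k (j',l')" "p \<in> G" unfolding Bd_def by auto
  have kp: "0 < real k" using k by auto
  have qs: "q \<in> unit_square" "p \<in> unit_square" using q(1) p(1) cell_sub_us by auto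
  then have "snd q > f (fst q)" using q(2) G by auto
  have pg: "snd p \<le> f (fst p)" using p(2) G by auto
  have "(real j + 1) / k \<le> real j' / k" "(real l + 1) / k \<le> real l' / k"
    using lt kp by (auto simp: divide_right_mono)
  then have le: "fst q \<le> fst p" "snd q \<le> snd p"
    using cell_bounds[OF k q(1)] cell_bounds[OF k p(1)] by linarith+
  have "fst q \<in> {0..1}" "fst p \<in> {0..1}" using qs unfolding unit_square_def by auto
  then have "f (fst p) \<le> f (fst q)" using hf le(1) by blast
  then show False using le(2) pg \<open>snd q > f (fst q)\<close> by linarith
qed

lemma card_Bd:
  assumes k: "1 \<le> k"
    and hf: "\<forall>a\<in>{0..1}. \<forall>b\<in>{0..1}. a \<le> b \<longrightarrow> f b \<le> f a"
    and G: "G = {x \<in> unit_square. snd x \<le> f (fst x)}"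
  shows "card (Bd k G) \<le> 2 * k"
proof -
  let ?g = "\<lambda>c::nat\<times>nat. int (fst c) - int (snd c)"
  have inj: "inj_on ?g (Bd k G)"
  proof (rule inj_onI)
    fix c d assume c: "c \<in> Bd k G" and d: "d \<in> Bd k G" and e: "?g c = ?g d"
    obtain j l where cj: "c = (j,l)" by (cases c)
    obtain j' l' where dj: "d = (j',l')" by (cases d)
    show "c = d"
    proof (cases "j = j'")
      case True then show ?thesis using e cj dj by auto
    next
      case False
      then consider "j < j'" | "j' < j" by linarith
      then show ?thesis
      proof cases
        case 1 then have "l < l'" using e cj dj by auto
        then show ?thesis using Bd_noncross[OF k hf G, of j l j' l'] c d cj dj 1 by auto
      next
        case 2 then have "l' < l" using e cj dj by auto
        then show ?thesis using Bd_noncross[OF k hf G, of j' l' j l] c d cj dj 2 by auto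
      qed
    qed
  qed
  have sub: "?g ` Bd k G \<subseteq> {- int k <..< int k}"
    unfolding Bd_def Idx_def by auto
  have "card (Bd k G) = card (?g ` Bd k G)" using card_image[OF inj] by simp
  also have "\<dots> \<le> card {- int k <..< int k}" by (rule card_mono[OF _ sub]) simp
  also have "\<dots> \<le> 2 * k" by simp
  finally show ?thesis .
qed




lemma prod_pair_int:
  fixes g :: "'a \<Rightarrow> real" and n :: nat
  assumes P: "prob_space P" and g: "integrable P g" "integrable P (\<lambda>w. (g w)^2)"
    and i: "i < n" and j: "j < n"
  shows "integrable (PiM {..<n} (\<lambda>_. P)) (\<lambda>z. g (z i) * g (z j))"
    "(\<integral>z. g (z i) * g (z j) \<partial>PiM {..<n} (\<lambda>_. P)) =
       (if i = j then (\<integral>w. (g w)^2 \<partial>P) else (\<integral>w. g w \<partial>P)^2)"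
proof -
  interpret prob_space P by fact
  interpret PS: product_sigma_finite "\<lambda>_. P" by unfold_locales
  have one: "integrable P (\<lambda>_. 1::real)" by simp
  have conj: "integrable (PiM {..<n} (\<lambda>_. P)) (\<lambda>z. g (z i) * g (z j)) \<and>
    (\<integral>z. g (z i) * g (z j) \<partial>PiM {..<n} (\<lambda>_. P)) =
       (if i = j then (\<integral>w. (g w)^2 \<partial>P) else (\<integral>w. g w \<partial>P)^2)"
  proof (cases "i = j")
    case True
    define F where "F = (\<lambda>m w. if m = i then (g w)^2 else (1::real))"
    have Fi: "\<And>m. m \<in> {..<n} \<Longrightarrow> integrable P (F m)"
    proof -
      fix m show "integrable P (F m)" unfolding F_def using g one by (cases "m = i"; cases "m = j"; simp)
    qed
    have eq: "\<And>z. (\<Prod>m\<in>{..<n}. F m (z m)) = g (z i) * g (z j)"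
      using True i unfolding F_def
      by (subst prod.delta) (auto simp: power2_eq_square)
    have eq2: "(\<Prod>m\<in>{..<n}. integral\<^sup>L P (F m)) = (\<integral>w. (g w)^2 \<partial>P)"
      proof -
      have "\<And>m. integral\<^sup>L P (F m) = (if m = i then (\<integral>w. (g w)^2 \<partial>P) else 1)"
        unfolding F_def by (case_tac "m = i") (simp_all add: prob_space)
      then show ?thesis using i by (simp add: prod.delta)
    qed
    show ?thesis using PS.product_integrable_prod[of "{..<n}" F] PS.product_integral_prod[of "{..<n}" F] Fi
      unfolding eq eq2 using True by simp
  next
    case False
    define F where "F = (\<lambda>m w. if m \<in> {i, j} then g w else (1::real))"
    have Fi: "\<And>m. m \<in> {..<n} \<Longrightarrow> integrable P (F m)"
    proof -
      fix m show "integrable P (F m)" unfolding F_def using g one by (cases "m = i"; cases "m = j"; simp)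
    qed
    have s: "{..<n} \<inter> {i, j} = {i, j}" using i j by auto
    have eq: "\<And>z. (\<Prod>m\<in>{..<n}. F m (z m)) = g (z i) * g (z j)"
      using False unfolding F_def
      by (subst prod.inter_restrict[symmetric]) (simp_all add: s)
    have eq2: "(\<Prod>m\<in>{..<n}. integral\<^sup>L P (F m)) = (\<integral>w. g w \<partial>P)^2"
      proof -
      have "\<And>m. integral\<^sup>L P (F m) = (if m \<in> {i,j} then (\<integral>w. g w \<partial>P) else 1)"
        unfolding F_def by (case_tac "m \<in> {i,j}") (simp_all add: prob_space)
      then have "(\<Prod>m\<in>{..<n}. integral\<^sup>L P (F m)) = (\<Prod>m\<in>{..<n}. if m \<in> {i,j} then (\<integral>w. g w \<partial>P) else 1)"
        by (intro prod.cong) auto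
      also have "\<dots> = (\<Prod>m\<in>{..<n} \<inter> {i,j}. (\<integral>w. g w \<partial>P))"
        by (subst prod.inter_restrict) simp_all
      finally show ?thesis using False by (simp add: s power2_eq_square)
    qed
    show ?thesis using PS.product_integrable_prod[of "{..<n}" F] PS.product_integral_prod[of "{..<n}" F] Fi
      unfolding eq eq2 using False by simp
  qed
  then show "integrable (PiM {..<n} (\<lambda>_. P)) (\<lambda>z. g (z i) * g (z j))" by simp
  from conj show "(\<integral>z. g (z i) * g (z j) \<partial>PiM {..<n} (\<lambda>_. P)) =
       (if i = j then (\<integral>w. (g w)^2 \<partial>P) else (\<integral>w. g w \<partial>P)^2)" by simp
qed

lemma comp_int:
  fixes g :: "'a \<Rightarrow> real" and n :: nat
  assumes P: "prob_space P" and g: "integrable P g" and i: "i < n"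
  shows "integrable (PiM {..<n} (\<lambda>_. P)) (\<lambda>z. g (z i))"
proof -
  have d: "distr (PiM {..<n} (\<lambda>_. P)) P (\<lambda>z. z i) = P"
    using distr_PiM_component[of "{..<n}" "\<lambda>_. P" i] P i by auto
  have m: "(\<lambda>z. z i) \<in> measurable (PiM {..<n} (\<lambda>_. P)) P"
    using i by (intro measurable_component_singleton) auto
  show ?thesis using integrable_distr_eq[OF m, of g] g d by auto
qed

lemma emp_dev:
  fixes h :: "'a \<Rightarrow> real" and n :: nat and \<epsilon> :: real
  assumes P: "prob_space P" and h: "integrable P h" "integrable P (\<lambda>w. (h w)^2)"
    and n: "0 < n" and eps: "0 < \<epsilon>" and hb: "(\<integral>w. (h w)^2 \<partial>P) \<le> \<epsilon>^2 * n"
  shows "integrable (PiM {..<n} (\<lambda>_. P)) (\<lambda>z. \<bar>(1/n) * (\<Sum>i<n. h (z i)) - (\<integral>w. h w \<partial>P)\<bar>)"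
    "(\<integral>z. \<bar>(1/n) * (\<Sum>i<n. h (z i)) - (\<integral>w. h w \<partial>P)\<bar> \<partial>PiM {..<n} (\<lambda>_. P)) \<le> \<epsilon>"
proof -
  interpret prob_space P by fact
  let ?Q = "PiM {..<n} (\<lambda>_. P)"
  interpret Q: prob_space ?Q by (rule prob_space_PiM) (use P in auto)
  define \<mu> where "\<mu> = (\<integral>w. h w \<partial>P)"
  define g where "g = (\<lambda>w. h w - \<mu>)"
  have gi: "integrable P g" unfolding g_def using h by simp
  have g2eq: "(\<lambda>w. (g w)^2) = (\<lambda>w. (h w)^2 - 2 * \<mu> * h w + \<mu>^2)"
    unfolding g_def by (auto simp: power2_eq_square algebra_simps)
  have g2i: "integrable P (\<lambda>w. (g w)^2)" unfolding g2eq using h by simp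
  have g0: "(\<integral>w. g w \<partial>P) = 0" unfolding g_def \<mu>_def using h by (simp add: prob_space)
  have "(\<integral>w. (g w)^2 \<partial>P) = (\<integral>w. (h w)^2 \<partial>P) - 2 * \<mu> * \<mu> + \<mu>^2"
    unfolding g2eq using h by (simp add: prob_space \<mu>_def)
  then have g2b: "(\<integral>w. (g w)^2 \<partial>P) \<le> \<epsilon>^2 * n" using hb zero_le_square[of \<mu>] unfolding power2_eq_square by linarith
  define Z where "Z = (\<lambda>z. (1/n) * (\<Sum>i<n. g (z i)))"
  have Zeq: "\<And>z. (1/n) * (\<Sum>i<n. h (z i)) - \<mu> = Z z"
    unfolding Z_def g_def using n by (simp add: sum_subtractf field_simps)
  have Zi: "integrable ?Q Z" unfolding Z_def
    using comp_int[OF P gi] by (intro integrable_mult_right integrable_sum) auto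
  have Z2eq: "\<And>z. (Z z)^2 = (1/n)^2 * (\<Sum>i<n. \<Sum>j<n. g (z i) * g (z j))"
    unfolding Z_def by (simp add: power2_eq_square sum_product algebra_simps)
  have I1: "\<And>i j. i < n \<Longrightarrow> j < n \<Longrightarrow> integrable ?Q (\<lambda>z. g (z i) * g (z j))"
    using prod_pair_int(1)[OF P gi g2i] by blast
  have I2: "\<And>i. i < n \<Longrightarrow> integrable ?Q (\<lambda>z. \<Sum>j<n. g (z i) * g (z j))"
  proof -
    fix i assume "i < n"
    show "integrable ?Q (\<lambda>z. \<Sum>j<n. g (z i) * g (z j))"
      by (rule Bochner_Integration.integrable_sum) (use I1 \<open>i < n\<close> in auto)
  qed
  have I3: "integrable ?Q (\<lambda>z. \<Sum>i<n. \<Sum>j<n. g (z i) * g (z j))"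
    by (rule Bochner_Integration.integrable_sum) (use I2 in auto)
  have Z2i: "integrable ?Q (\<lambda>z. (Z z)^2)" unfolding Z2eq
    using I3 by simp
  have "(\<integral>z. (Z z)^2 \<partial>?Q) = (1/n)^2 * (\<Sum>i<n. \<Sum>j<n. (\<integral>z. g (z i) * g (z j) \<partial>?Q))"
    unfolding Z2eq integral_mult_right_zero
    using Bochner_Integration.integral_sum[of "{..<n}" ?Q "\<lambda>i z. \<Sum>j<n. g (z i) * g (z j)"] I2 I1 
    by (simp add: integral_sum)
  also have "\<dots> = (1/n)^2 * (\<Sum>i<n. \<Sum>j<n. if i = j then (\<integral>w. (g w)^2 \<partial>P) else 0)"
    by (intro arg_cong[where f="\<lambda>x. (1/n)^2 * x"] sum.cong refl) (simp add: prod_pair_int(2)[OF P gi g2i] g0)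
  also have "\<dots> = (1/n)^2 * (n * (\<integral>w. (g w)^2 \<partial>P))"
    by simp
  also have "\<dots> \<le> (1/n)^2 * (n * (\<epsilon>^2 * n))"
    using g2b n by (intro mult_left_mono) auto
  also have "\<dots> = \<epsilon>^2" using n by (simp add: power2_eq_square)
  finally have Z2b: "(\<integral>z. (Z z)^2 \<partial>?Q) \<le> \<epsilon>^2" .
  show "integrable ?Q (\<lambda>z. \<bar>(1/n) * (\<Sum>i<n. h (z i)) - (\<integral>w. h w \<partial>P)\<bar>)"
    unfolding \<mu>_def[symmetric] Zeq using Zi by simp
  have pw: "\<And>z. \<bar>Z z\<bar> \<le> ((Z z)^2 / \<epsilon> + \<epsilon>) / 2"
  proof -
    fix z
    have "0 \<le> (\<bar>Z z\<bar> - \<epsilon>)^2" by simp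
    then have "2 * \<epsilon> * \<bar>Z z\<bar> \<le> (Z z)^2 + \<epsilon>^2" by (simp add: power2_eq_square algebra_simps)
    then show "\<bar>Z z\<bar> \<le> ((Z z)^2 / \<epsilon> + \<epsilon>) / 2" using eps
      by (simp add: field_simps power2_eq_square)
  qed
  have "(\<integral>z. \<bar>Z z\<bar> \<partial>?Q) \<le> (\<integral>z. ((Z z)^2 / \<epsilon> + \<epsilon>) / 2 \<partial>?Q)"
    using Zi Z2i pw by (intro integral_mono) auto
  also have "\<dots> = ((\<integral>z. (Z z)^2 \<partial>?Q) / \<epsilon> + \<epsilon>) / 2"
    using Z2i by (simp add: Q.prob_space)
  also have "\<dots> \<le> (\<epsilon>^2 / \<epsilon> + \<epsilon>) / 2"
    using Z2b eps by (intro divide_right_mono add_right_mono) auto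
  also have "\<dots> = \<epsilon>" using eps by (simp add: power2_eq_square)
  finally show "(\<integral>z. \<bar>(1/n) * (\<Sum>i<n. h (z i)) - (\<integral>w. h w \<partial>P)\<bar> \<partial>?Q) \<le> \<epsilon>"
    unfolding \<mu>_def[symmetric] Zeq .
qed




definition wt :: "(real \<times> real \<Rightarrow> real) \<Rightarrow> (real \<times> real) set \<Rightarrow> obs \<Rightarrow> real" where
  "wt e S w = score e w * indicator S (obsX w)"
definition awt :: "(real \<times> real \<Rightarrow> real) \<Rightarrow> (real \<times> real) set \<Rightarrow> obs \<Rightarrow> real" where
  "awt e S w = \<bar>score e w\<bar> * indicator S (obsX w)"

lemma mono_set_meas:
  assumes hf: "\<forall>a\<in>{0..1}. \<forall>b\<in>{0..1}. a \<le> b \<longrightarrow> f b \<le> f a"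
  shows "{x \<in> unit_square. snd x \<le> f (fst x)} \<in> sets borel"
proof -
  define f' where "f' t = - f (max 0 (min 1 t))" for t
  have "mono f'" unfolding mono_def f'_def using hf by (auto intro!: max.mono min.mono)
  then have [measurable]: "f' \<in> borel_measurable borel" by (rule borel_measurable_mono)
  have "{x \<in> unit_square. snd x \<le> f (fst x)} = unit_square \<inter> {x. - snd x \<ge> f' (fst x)}"
    unfolding f'_def unit_square_def by auto
  also have "\<dots> \<in> sets borel" by measurable
  finally show ?thesis .
qed

locale adm =
  fixes M \<kappa> A :: real and P :: "obs measure" and e
  assumes adm: "admissible M \<kappa> A P e" and Mp: "0 < M" and kp: "0 < \<kappa>" and Ap: "0 < A"
begin

definition B where "B = M / (2 * \<kappa>)"

lemma Bp: "0 < B" unfolding B_def using Mp kp by simp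

lemma P: "prob_space P" using adm unfolding admissible_def by auto
lemma sP: "sets P = sets borel" using adm unfolding admissible_def by auto
lemma em[measurable]: "e \<in> borel_measurable borel" using adm unfolding admissible_def by auto

sublocale prob_space P by (rule P)

lemma meas_P: "f \<in> borel_measurable borel \<Longrightarrow> f \<in> borel_measurable P"
  using measurable_cong_sets[OF sP refl] by auto

lemma ind_meas[measurable]: "S \<in> sets borel \<Longrightarrow> (\<lambda>w. indicator S (obsX w) :: real) \<in> borel_measurable borel"
  using measurable_compose[OF mX borel_measurable_indicator] by auto

lemma wt_meas: "S \<in> sets borel \<Longrightarrow> wt e S \<in> borel_measurable P"
  unfolding wt_def by (intro meas_P borel_measurable_times mscore[OF em] ind_meas)
lemma awt_meas: "S \<in> sets borel \<Longrightarrow> awt e S \<in> borel_measurable P"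
  unfolding awt_def by (intro meas_P borel_measurable_times borel_measurable_abs mscore[OF em] ind_meas)

lemma score_bound: "AE w in P. obsX w \<in> unit_square \<longrightarrow> \<bar>score e w\<bar> \<le> B"
proof -
  have Y: "AE w in P. \<bar>obsY w\<bar> \<le> M / 2" using adm unfolding admissible_def by auto
  have eb: "\<forall>x\<in>unit_square. \<kappa> \<le> e x \<and> e x \<le> 1 - \<kappa>" using adm unfolding admissible_def by auto
  show ?thesis using Y
  proof (rule AE_mp, intro AE_I2 impI)
    fix w assume y: "\<bar>obsY w\<bar> \<le> M / 2" and x: "obsX w \<in> unit_square"
    have e1: "\<kappa> \<le> e (obsX w)" "\<kappa> \<le> 1 - e (obsX w)" using eb x by auto
    have e1p: "0 < e (obsX w)" "0 < 1 - e (obsX w)" using e1 kp by auto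
    show "\<bar>score e w\<bar> \<le> B"
    proof (cases "obsD w")
      case d: True
      have "\<bar>score e w\<bar> = \<bar>obsY w\<bar> / e (obsX w)" unfolding score_def using e1p d by (simp add: abs_divide)
      also have "\<dots> \<le> (M/2) / \<kappa>" using y e1 e1p kp by (intro frac_le) simp_all
      finally show ?thesis unfolding B_def by simp
    next
      case d: False
      have "\<bar>score e w\<bar> = \<bar>obsY w\<bar> / (1 - e (obsX w))" unfolding score_def using e1p d by (simp add: abs_divide)
      also have "\<dots> \<le> (M/2) / \<kappa>" using y e1 e1p kp by (intro frac_le) simp_all
      finally show ?thesis unfolding B_def by simp
    qed
  qed
qed

lemma awt_bound: "S \<subseteq> unit_square \<Longrightarrow> AE w in P. \<bar>wt e S w\<bar> \<le> awt e S w \<and> awt e S w \<le> B * indicator S (obsX w)"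
  using score_bound
proof eventually_elim
  case (elim w)
  assume "S \<subseteq> unit_square"
  then show ?case using elim by (cases "obsX w \<in> S") (auto simp: wt_def awt_def abs_mult)
qed

lemma wt_int:
  assumes S: "S \<in> sets borel" "S \<subseteq> unit_square"
  shows "integrable P (wt e S)" "integrable P (awt e S)"
    "integrable P (\<lambda>w. (wt e S w)^2)" "integrable P (\<lambda>w. (awt e S w)^2)"
proof -
  have b: "AE w in P. \<bar>wt e S w\<bar> \<le> B \<and> \<bar>awt e S w\<bar> \<le> B"
    using awt_bound[OF S(2)] by eventually_elim (use Bp in \<open>auto simp: indicator_def awt_def\<close>)
  have b2: "AE w in P. \<bar>(wt e S w)^2\<bar> \<le> B^2 \<and> \<bar>(awt e S w)^2\<bar> \<le> B^2"
    using b
  proof eventually_elim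
    case (elim w)
    have "\<bar>B\<bar> = B" using Bp by simp
    then show ?case using elim by (metis abs_le_square_iff abs_power2)
  qed
  show "integrable P (wt e S)" using b by (intro integrable_const_bound[where B=B] wt_meas S) auto
  show "integrable P (awt e S)" using b by (intro integrable_const_bound[where B=B] awt_meas S) auto
  show "integrable P (\<lambda>w. (wt e S w)^2)" using b2
    by (intro integrable_const_bound[where B="B^2"] borel_measurable_power wt_meas S) auto
  show "integrable P (\<lambda>w. (awt e S w)^2)" using b2
    by (intro integrable_const_bound[where B="B^2"] borel_measurable_power awt_meas S) auto
qed

lemma mXP: "obsX \<in> measurable P lborel"
  by (subst measurable_cong_sets[OF sP sets_lborel]) (rule mX)

lemma cell_prob:
  assumes k: "1 \<le> k"
  shows "(\<integral>w. indicator (cell k c) (obsX w) \<partial>P) \<le> A / (real k)^2"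
proof -
  obtain f where fm: "f \<in> borel_measurable lborel" and fb: "\<And>x. 0 \<le> f x \<and> f x \<le> A"
    and d: "distr P lborel obsX = density lborel (\<lambda>x. ennreal (f x))"
    using adm unfolding admissible_def by blast
  obtain j l where c: "c = (j,l)" by (cases c)
  define C where "C = cbox (real j / k, real l / k) ((real j + 1) / k, (real l + 1) / k)"
  have CS: "cell k c \<subseteq> C" unfolding C_def c using cell_cbox[OF k] .
  have Cm: "emeasure lborel C = ennreal (1 / (real k)^2)" unfolding C_def by (rule lborel_cbox_cell[OF k])
  have Sm: "cell k c \<in> sets lborel" unfolding sets_lborel by (rule cell_meas)
  have "emeasure (density lborel (\<lambda>x. ennreal (f x))) (cell k c) = (\<integral>\<^sup>+x. ennreal (f x) * indicator (cell k c) x \<partial>lborel)"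
    using fm Sm by (intro emeasure_density) auto
  also have "\<dots> \<le> (\<integral>\<^sup>+x. ennreal A * indicator C x \<partial>lborel)"
  proof (rule nn_integral_mono)
    fix x
    show "ennreal (f x) * indicator (cell k c) x \<le> ennreal A * indicator C x"
    proof (cases "x \<in> cell k c")
      case True
      then have "x \<in> C" using CS by blast
      then show ?thesis using True fb[of x] by (simp add: ennreal_leI)
    next
      case False then show ?thesis by simp
    qed
  qed
  also have "\<dots> = ennreal A * emeasure lborel C"
  proof (rule nn_integral_cmult_indicator)
    show "C \<in> sets lborel" unfolding C_def sets_lborel by (rule borel_compact) (rule compact_cbox)
  qed
  also have "\<dots> = ennreal (A / (real k)^2)" unfolding Cm
  proof -
    have "0 \<le> A" "0 \<le> 1 / (real k)^2" using Ap by auto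
    then have "ennreal A * ennreal (1 / (real k)^2) = ennreal (A * (1 / (real k)^2))"
      using ennreal_mult by metis
    then show "ennreal A * ennreal (1 / (real k)^2) = ennreal (A / (real k)^2)" by simp
  qed
  finally have le: "emeasure (density lborel (\<lambda>x. ennreal (f x))) (cell k c) \<le> ennreal (A / (real k)^2)" .
  have fin: "emeasure (density lborel (\<lambda>x. ennreal (f x))) (cell k c) < top"
    using le_less_trans[OF le ennreal_less_top] .
  have "(\<integral>w. indicator (cell k c) (obsX w) \<partial>P) = (\<integral>x. indicator (cell k c) x \<partial>distr P lborel obsX :: real)"
  proof -
    have mi: "(indicator (cell k c) :: real \<times> real \<Rightarrow> real) \<in> borel_measurable lborel"
      using Sm by simp
    show ?thesis using integral_distr[OF mXP mi] by simp
  qed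
  also have "\<dots> = measure (density lborel (\<lambda>x. ennreal (f x))) (cell k c)"
    unfolding d by simp
  also have "\<dots> \<le> A / (real k)^2"
    using le Ap by (simp add: measure_def enn2real_leI)
  finally show ?thesis .
qed

lemma ind_int: "S \<in> sets borel \<Longrightarrow> integrable P (\<lambda>w. indicator S (obsX w) :: real)"
  by (intro integrable_const_bound[where B=1] meas_P ind_meas) auto

lemma cell_bounds_int:
  assumes k: "1 \<le> k"
  shows "(\<integral>w. awt e (cell k c) w \<partial>P) \<le> B * (A / (real k)^2)"
    "(\<integral>w. (wt e (cell k c) w)^2 \<partial>P) \<le> B^2 * (A / (real k)^2)"
    "(\<integral>w. (awt e (cell k c) w)^2 \<partial>P) \<le> B^2 * (A / (real k)^2)"
proof -
  note S = cell_meas[of k c] cell_sub_us[of k c]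
  note I = wt_int[OF S] ind_int[OF S(1)]
  note cp = cell_prob[OF k, of c]
  have ab: "AE w in P. \<bar>wt e (cell k c) w\<bar> \<le> awt e (cell k c) w \<and> awt e (cell k c) w \<le> B * indicator (cell k c) (obsX w)"
    by (rule awt_bound[OF S(2)])
  have "(\<integral>w. awt e (cell k c) w \<partial>P) \<le> (\<integral>w. B * indicator (cell k c) (obsX w) \<partial>P)"
    using ab I by (intro integral_mono_AE) (auto elim: eventually_mono)
  also have "\<dots> = B * (\<integral>w. indicator (cell k c) (obsX w) \<partial>P)" by simp
  also have "\<dots> \<le> B * (A / (real k)^2)" using cp Bp by (intro mult_left_mono) auto
  finally show "(\<integral>w. awt e (cell k c) w \<partial>P) \<le> B * (A / (real k)^2)" .
  have sq: "AE w in P. (wt e (cell k c) w)^2 \<le> B^2 * indicator (cell k c) (obsX w) \<and>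
      (awt e (cell k c) w)^2 \<le> B^2 * indicator (cell k c) (obsX w)"
    using ab
  proof eventually_elim
    case (elim w)
    show ?case
    proof (cases "obsX w \<in> cell k c")
      case True
      then have "awt e (cell k c) w \<le> B" "0 \<le> awt e (cell k c) w" using elim by (auto simp: awt_def)
      then have a2: "(awt e (cell k c) w)^2 \<le> B^2" by (intro power_mono) auto
      have "(wt e (cell k c) w)^2 \<le> (awt e (cell k c) w)^2"
      proof -
        have "\<bar>wt e (cell k c) w\<bar>^2 \<le> (awt e (cell k c) w)^2"
          using elim by (intro power_mono) auto
        then show ?thesis by simp
      qed
      then show ?thesis using a2 True by simp
    next
      case False then show ?thesis by (simp add: wt_def awt_def)
    qed
  qed
  have "(\<integral>w. (wt e (cell k c) w)^2 \<partial>P) \<le> (\<integral>w. B^2 * indicator (cell k c) (obsX w) \<partial>P)"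
    using sq I by (intro integral_mono_AE) (auto elim: eventually_mono)
  also have "\<dots> = B^2 * (\<integral>w. indicator (cell k c) (obsX w) \<partial>P)" by simp
  also have "\<dots> \<le> B^2 * (A / (real k)^2)" using cp by (intro mult_left_mono) auto
  finally show "(\<integral>w. (wt e (cell k c) w)^2 \<partial>P) \<le> B^2 * (A / (real k)^2)" .
  have "(\<integral>w. (awt e (cell k c) w)^2 \<partial>P) \<le> (\<integral>w. B^2 * indicator (cell k c) (obsX w) \<partial>P)"
    using sq I by (intro integral_mono_AE) (auto elim: eventually_mono)
  also have "\<dots> = B^2 * (\<integral>w. indicator (cell k c) (obsX w) \<partial>P)" by simp
  also have "\<dots> \<le> B^2 * (A / (real k)^2)" using cp by (intro mult_left_mono) auto
  finally show "(\<integral>w. (awt e (cell k c) w)^2 \<partial>P) \<le> B^2 * (A / (real k)^2)" .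
qed

definition Da where "Da n k c z = (1/real n) * (\<Sum>i<n. wt e (cell k c) (z i)) - (\<integral>w. wt e (cell k c) w \<partial>P)"
definition Db where "Db n k c z = (1/real n) * (\<Sum>i<n. awt e (cell k c) (z i)) - (\<integral>w. awt e (cell k c) w \<partial>P)"
definition R where "R n k z = (\<Sum>c\<in>Idx k. \<bar>Da n k c z\<bar> + \<bar>Db n k c z\<bar>) + real (2 * k) * (2 * (B * (A / (real k)^2)))"

definition EE where "EE n T z = (1/real n) * (\<Sum>i<n. wt e T (z i)) - (\<integral>w. wt e T w \<partial>P)"

lemma cell_term:
  assumes k: "1 \<le> k" and G: "G \<in> sets borel" "G \<subseteq> unit_square"
  shows "\<bar>EE n (G \<inter> cell k c) z\<bar> \<le> \<bar>Da n k c z\<bar> + \<bar>Db n k c z\<bar> + (if c \<in> Bd k G then 2 * (B * (A / (real k)^2)) else 0)"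
proof -
  consider "cell k c \<subseteq> G" | "cell k c \<inter> G = {}" | "cell k c \<inter> G \<noteq> {} \<and> \<not> cell k c \<subseteq> G" by blast
  then show ?thesis
  proof cases
    case 1
    then have "G \<inter> cell k c = cell k c" by blast
    then have "EE n (G \<inter> cell k c) z = Da n k c z" unfolding EE_def Da_def by simp
    moreover have "0 \<le> 2 * (B * (A / (real k)^2))" using Bp Ap by simp
    ultimately show ?thesis by simp
  next
    case 2
    then have "G \<inter> cell k c = {}" by blast
    then have "EE n (G \<inter> cell k c) z = 0" unfolding EE_def wt_def by simp
    moreover have "0 \<le> 2 * (B * (A / (real k)^2))" using Bp Ap by simp
    ultimately show ?thesis by simp
  next
    case 3
    note S = cell_meas[of k c] cell_sub_us[of k c]
    have GS: "G \<inter> cell k c \<in> sets borel" "G \<inter> cell k c \<subseteq> unit_square" using G S by auto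
    have pw: "\<And>w. \<bar>wt e (G \<inter> cell k c) w\<bar> \<le> awt e (cell k c) w"
      unfolding wt_def awt_def by (auto simp: indicator_def abs_mult)
    have "\<bar>(1/real n) * (\<Sum>i<n. wt e (G \<inter> cell k c) (z i))\<bar> \<le> (1/real n) * (\<Sum>i<n. \<bar>wt e (G \<inter> cell k c) (z i)\<bar>)"
      unfolding abs_mult by (simp only: abs_of_nonneg[of "1 / real n"] divide_nonneg_nonneg of_nat_0_le_iff zero_le_one)
        (intro mult_left_mono sum_abs, simp)
    also have "\<dots> \<le> (1/real n) * (\<Sum>i<n. awt e (cell k c) (z i))"
      using pw by (intro mult_left_mono sum_mono) auto
    also have "\<dots> = Db n k c z + (\<integral>w. awt e (cell k c) w \<partial>P)" unfolding Db_def by simp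
    finally have e1: "\<bar>(1/real n) * (\<Sum>i<n. wt e (G \<inter> cell k c) (z i))\<bar> \<le> \<bar>Db n k c z\<bar> + (\<integral>w. awt e (cell k c) w \<partial>P)"
      by linarith
    have "\<bar>\<integral>w. wt e (G \<inter> cell k c) w \<partial>P\<bar> \<le> (\<integral>w. \<bar>wt e (G \<inter> cell k c) w\<bar> \<partial>P)"
      by (rule integral_abs_bound)
    also have "\<dots> \<le> (\<integral>w. awt e (cell k c) w \<partial>P)"
      using pw wt_int[OF GS] wt_int[OF S] by (intro integral_mono) auto
    finally have e2: "\<bar>\<integral>w. wt e (G \<inter> cell k c) w \<partial>P\<bar> \<le> (\<integral>w. awt e (cell k c) w \<partial>P)" .
    have cB: "c \<in> Bd k G \<or> c \<notin> Idx k" using 3 unfolding Bd_def by auto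
    show ?thesis
    proof (cases "c \<in> Bd k G")
      case True
      have "\<bar>EE n (G \<inter> cell k c) z\<bar> \<le> \<bar>Db n k c z\<bar> + 2 * (\<integral>w. awt e (cell k c) w \<partial>P)"
        unfolding EE_def using e1 e2 by linarith
      also have "\<dots> \<le> \<bar>Db n k c z\<bar> + 2 * (B * (A / (real k)^2))"
        using cell_bounds_int(1)[OF k, of c] by linarith
      finally show ?thesis using True by simp
    next
      case False
      then have "c \<notin> Idx k" using cB by auto
      then have "cell k c = {}" unfolding Idx_def cell_def using ci_lt[OF k] by (cases c) auto
      then show ?thesis using 3 by simp
    qed
  qed
qed

lemma wt_split:
  assumes k: "1 \<le> k" and G: "G \<subseteq> unit_square"
  shows "wt e G w = (\<Sum>c\<in>Idx k. wt e (G \<inter> cell k c) w)"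
  unfolding wt_def using cell_partition[OF k G, of "obsX w"] by (simp add: sum_distrib_left)

lemma decomp:
  assumes k: "1 \<le> k" and G: "G \<in> sets borel" "G \<subseteq> unit_square"
  shows "emp_welfare n e z G - welfare P e G = (\<Sum>c\<in>Idx k. EE n (G \<inter> cell k c) z)"
proof -
  have GS: "\<And>c. G \<inter> cell k c \<in> sets borel" "\<And>c. G \<inter> cell k c \<subseteq> unit_square"
    using G cell_meas cell_sub_us by auto
  have "emp_welfare n e z G = (1/real n) * (\<Sum>i<n. wt e G (z i))"
    unfolding emp_welfare_def wt_def by simp
  also have "\<dots> = (\<Sum>c\<in>Idx k. (1/real n) * (\<Sum>i<n. wt e (G \<inter> cell k c) (z i)))"
    unfolding wt_split[OF k G(2)] by (simp add: sum_distrib_left sum.swap[of _ "{..<n}"])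
  finally have e1: "emp_welfare n e z G = (\<Sum>c\<in>Idx k. (1/real n) * (\<Sum>i<n. wt e (G \<inter> cell k c) (z i)))" .
  have "welfare P e G = (\<integral>w. wt e G w \<partial>P)" unfolding welfare_def wt_def by simp
  also have "\<dots> = (\<integral>w. (\<Sum>c\<in>Idx k. wt e (G \<inter> cell k c) w) \<partial>P)"
    unfolding wt_split[OF k G(2)] ..
  also have "\<dots> = (\<Sum>c\<in>Idx k. (\<integral>w. wt e (G \<inter> cell k c) w \<partial>P))"
    by (rule Bochner_Integration.integral_sum) (use wt_int(1)[OF GS] in auto)
  finally have e2: "welfare P e G = (\<Sum>c\<in>Idx k. (\<integral>w. wt e (G \<inter> cell k c) w \<partial>P))" .
  show ?thesis unfolding e1 e2 EE_def by (simp add: sum_subtractf)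
qed

lemma dev_bound:
  assumes k: "1 \<le> k"
    and hf: "\<forall>a\<in>{0..1}. \<forall>b\<in>{0..1}. a \<le> b \<longrightarrow> f b \<le> f a"
    and G: "G = {x \<in> unit_square. snd x \<le> f (fst x)}"
  shows "\<bar>emp_welfare n e z G - welfare P e G\<bar> \<le> R n k z"
proof -
  have Gm: "G \<in> sets borel" unfolding G by (rule mono_set_meas[OF hf])
  have Gs: "G \<subseteq> unit_square" unfolding G by auto
  define K where "K = 2 * (B * (A / (real k)^2))"
  have K0: "0 \<le> K" unfolding K_def using Bp Ap by simp
  have "\<bar>emp_welfare n e z G - welfare P e G\<bar> \<le> (\<Sum>c\<in>Idx k. \<bar>EE n (G \<inter> cell k c) z\<bar>)"
    unfolding decomp[OF k Gm Gs] by (rule sum_abs)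
  also have "\<dots> \<le> (\<Sum>c\<in>Idx k. \<bar>Da n k c z\<bar> + \<bar>Db n k c z\<bar> + (if c \<in> Bd k G then K else 0))"
    unfolding K_def by (intro sum_mono cell_term[OF k Gm Gs])
  also have "\<dots> = (\<Sum>c\<in>Idx k. \<bar>Da n k c z\<bar> + \<bar>Db n k c z\<bar>) + (\<Sum>c\<in>Idx k. if c \<in> Bd k G then K else 0)"
    by (simp add: sum.distrib)
  also have "(\<Sum>c\<in>Idx k. if c \<in> Bd k G then K else 0) = real (card (Bd k G)) * K"
  proof -
    have "(\<Sum>c\<in>Idx k. if c \<in> Bd k G then K else 0) = (\<Sum>c\<in>Idx k \<inter> Bd k G. K)"
      by (subst sum.inter_restrict) simp_all
    also have "Idx k \<inter> Bd k G = Bd k G" unfolding Bd_def by auto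
    finally show ?thesis by simp
  qed
  also have "real (card (Bd k G)) * K \<le> real (2 * k) * K"
    using card_Bd[OF k hf G] K0 by (intro mult_right_mono) auto
  finally show ?thesis unfolding R_def K_def by simp
qed

lemma alloc_unfold:
  assumes "G \<in> monotone_allocs"
  obtains f where "\<forall>a\<in>{0..1}. \<forall>b\<in>{0..1}. a \<le> b \<longrightarrow> f b \<le> f a"
    "G = {x \<in> unit_square. snd x \<le> f (fst x)}"
  using assms unfolding monotone_allocs_def by blast

lemma allocs_ne: "monotone_allocs \<noteq> {}"
proof -
  have "{x \<in> unit_square. snd x \<le> (\<lambda>_. 0::real) (fst x)} \<in> monotone_allocs"
    unfolding monotone_allocs_def by (intro CollectI exI[of _ "\<lambda>_. 0::real"]) auto
  then show ?thesis by blast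
qed

lemma welf_bound:
  assumes "G \<in> monotone_allocs"
  shows "\<bar>welfare P e G\<bar> \<le> B"
proof -
  obtain f where hf: "\<forall>a\<in>{0..1}. \<forall>b\<in>{0..1}. a \<le> b \<longrightarrow> f b \<le> f a"
    and G: "G = {x \<in> unit_square. snd x \<le> f (fst x)}" using alloc_unfold[OF assms] by blast
  have Gm: "G \<in> sets borel" unfolding G by (rule mono_set_meas[OF hf])
  have Gs: "G \<subseteq> unit_square" unfolding G by auto
  have ab: "AE w in P. \<bar>wt e G w\<bar> \<le> B"
    using awt_bound[OF Gs]
  proof eventually_elim
    case (elim w)
    then show ?case using Bp by (cases "obsX w \<in> G") auto
  qed
  have "\<bar>welfare P e G\<bar> = \<bar>\<integral>w. wt e G w \<partial>P\<bar>" unfolding welfare_def wt_def by simp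
  also have "\<dots> \<le> (\<integral>w. \<bar>wt e G w\<bar> \<partial>P)" by (rule integral_abs_bound)
  also have "\<dots> \<le> (\<integral>w. B \<partial>P)"
    using ab wt_int(1)[OF Gm Gs] by (intro integral_mono_AE) auto
  also have "\<dots> = B" by (simp add: prob_space)
  finally show ?thesis .
qed

lemma regret_pw:
  assumes k: "1 \<le> k" and rule: "is_EWM_rule n e Ghat"
  shows "welfare_star P e - welfare P e (Ghat z) \<le> 2 * R n k z"
proof -
  have Gh: "Ghat z \<in> monotone_allocs" and opt: "\<And>G. G \<in> monotone_allocs \<Longrightarrow> emp_welfare n e z G \<le> emp_welfare n e z (Ghat z)"
    using rule unfolding is_EWM_rule_def by auto
  have db: "\<And>G. G \<in> monotone_allocs \<Longrightarrow> \<bar>emp_welfare n e z G - welfare P e G\<bar> \<le> R n k z"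
  proof -
    fix G assume "G \<in> monotone_allocs"
    then obtain f where hf: "\<forall>a\<in>{0..1}. \<forall>b\<in>{0..1}. a \<le> b \<longrightarrow> f b \<le> f a"
      and G: "G = {x \<in> unit_square. snd x \<le> f (fst x)}" by (rule alloc_unfold)
    show "\<bar>emp_welfare n e z G - welfare P e G\<bar> \<le> R n k z" by (rule dev_bound[OF k hf G])
  qed
  have "welfare_star P e \<le> welfare P e (Ghat z) + 2 * R n k z"
    unfolding welfare_star_def
  proof (rule cSup_least)
    show "welfare P e ` monotone_allocs \<noteq> {}" using allocs_ne by blast
    fix x assume "x \<in> welfare P e ` monotone_allocs"
    then obtain G where G: "G \<in> monotone_allocs" and x: "x = welfare P e G" by blast
    have "welfare P e G \<le> emp_welfare n e z G + R n k z" using db[OF G] by linarith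
    also have "\<dots> \<le> emp_welfare n e z (Ghat z) + R n k z" using opt[OF G] by linarith
    also have "\<dots> \<le> welfare P e (Ghat z) + 2 * R n k z" using db[OF Gh] by linarith
    finally show "x \<le> welfare P e (Ghat z) + 2 * R n k z" using x by simp
  qed
  then show ?thesis by linarith
qed

lemma wstar_bound: "\<bar>welfare_star P e\<bar> \<le> B"
proof -
  have ne: "welfare P e ` monotone_allocs \<noteq> {}" using allocs_ne by blast
  have ub: "\<And>x. x \<in> welfare P e ` monotone_allocs \<Longrightarrow> x \<le> B \<and> - B \<le> x"
    using welf_bound by fastforce
  have bdd: "bdd_above (welfare P e ` monotone_allocs)" using ub by (meson bdd_aboveI)
  have "welfare_star P e \<le> B" unfolding welfare_star_def using ub ne by (intro cSup_least) auto
  moreover obtain x where x: "x \<in> welfare P e ` monotone_allocs" using ne by blast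
  then have "x \<le> welfare_star P e" unfolding welfare_star_def using bdd by (intro cSup_upper)
  then have "- B \<le> welfare_star P e" using ub[OF x] by linarith
  ultimately show ?thesis by linarith
qed

lemma card_Idx: "card (Idx k) = k * k" unfolding Idx_def by (simp add: card_cartesian_product)

lemma expect_R:
  assumes k: "1 \<le> k" and n: "0 < n"
  shows "integrable (PiM {..<n} (\<lambda>_. P)) (R n k)"
    "(\<integral>z. R n k z \<partial>PiM {..<n} (\<lambda>_. P)) \<le> 2 * real k * (B * sqrt A / sqrt (real n)) + 4 * B * A / real k"
proof -
  let ?Q = "PiM {..<n} (\<lambda>_. P)"
  interpret Q: prob_space ?Q by (rule prob_space_PiM) (use P in auto)
  define \<epsilon> where "\<epsilon> = B * sqrt A / (real k * sqrt (real n))"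
  have kp: "0 < real k" using k by auto
  have np: "0 < real n" using n by auto
  have ep: "0 < \<epsilon>" unfolding \<epsilon>_def using Bp Ap kp np by auto
  have e2: "\<epsilon>^2 * real n = B^2 * (A / (real k)^2)"
    unfolding \<epsilon>_def using Ap np kp by (simp add: power_divide power_mult_distrib)
  note S = cell_meas cell_sub_us
  have Da: "\<And>c. integrable ?Q (\<lambda>z. \<bar>Da n k c z\<bar>) \<and> (\<integral>z. \<bar>Da n k c z\<bar> \<partial>?Q) \<le> \<epsilon>"
  proof -
    fix c
    have h: "integrable P (wt e (cell k c))" "integrable P (\<lambda>w. (wt e (cell k c) w)^2)"
      using wt_int[OF S] by auto
    have hb: "(\<integral>w. (wt e (cell k c) w)^2 \<partial>P) \<le> \<epsilon>^2 * real n"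
      unfolding e2 by (rule cell_bounds_int(2)[OF k])
    show "integrable ?Q (\<lambda>z. \<bar>Da n k c z\<bar>) \<and> (\<integral>z. \<bar>Da n k c z\<bar> \<partial>?Q) \<le> \<epsilon>"
      unfolding Da_def using emp_dev[OF P h n ep hb] by simp
  qed
  have Db: "\<And>c. integrable ?Q (\<lambda>z. \<bar>Db n k c z\<bar>) \<and> (\<integral>z. \<bar>Db n k c z\<bar> \<partial>?Q) \<le> \<epsilon>"
  proof -
    fix c
    have h: "integrable P (awt e (cell k c))" "integrable P (\<lambda>w. (awt e (cell k c) w)^2)"
      using wt_int[OF S] by auto
    have hb: "(\<integral>w. (awt e (cell k c) w)^2 \<partial>P) \<le> \<epsilon>^2 * real n"
      unfolding e2 by (rule cell_bounds_int(3)[OF k])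
    show "integrable ?Q (\<lambda>z. \<bar>Db n k c z\<bar>) \<and> (\<integral>z. \<bar>Db n k c z\<bar> \<partial>?Q) \<le> \<epsilon>"
      unfolding Db_def using emp_dev[OF P h n ep hb] by simp
  qed
  have I1: "integrable ?Q (\<lambda>z. \<Sum>c\<in>Idx k. \<bar>Da n k c z\<bar> + \<bar>Db n k c z\<bar>)"
    by (rule Bochner_Integration.integrable_sum) (use Da Db in auto)
  show "integrable ?Q (R n k)" unfolding R_def[abs_def] using I1 by (intro Bochner_Integration.integrable_add) auto
  have "(\<integral>z. R n k z \<partial>?Q) = (\<integral>z. (\<Sum>c\<in>Idx k. \<bar>Da n k c z\<bar> + \<bar>Db n k c z\<bar>) \<partial>?Q) + real (2 * k) * (2 * (B * (A / (real k)^2)))"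
    unfolding R_def using I1 by (simp add: Q.prob_space)
  also have "(\<integral>z. (\<Sum>c\<in>Idx k. \<bar>Da n k c z\<bar> + \<bar>Db n k c z\<bar>) \<partial>?Q) = (\<Sum>c\<in>Idx k. (\<integral>z. \<bar>Da n k c z\<bar> \<partial>?Q) + (\<integral>z. \<bar>Db n k c z\<bar> \<partial>?Q))"
    using Da Db by (subst Bochner_Integration.integral_sum) auto
  also have "\<dots> \<le> (\<Sum>c\<in>Idx k. \<epsilon> + \<epsilon>)"
    using Da Db by (intro sum_mono add_mono) auto
  also have "\<dots> = real (k * k) * (2 * \<epsilon>)" by (simp add: card_Idx)
  also have "real (k * k) * (2 * \<epsilon>) = 2 * real k * (B * sqrt A / sqrt (real n))"
    unfolding \<epsilon>_def using kp by simp
  also have "real (2 * k) * (2 * (B * (A / (real k)^2))) = 4 * B * A / real k"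
    using kp by (simp add: power2_eq_square)
  finally show "(\<integral>z. R n k z \<partial>?Q) \<le> 2 * real k * (B * sqrt A / sqrt (real n)) + 4 * B * A / real k" by simp
qed

lemma regret_int:
  assumes k: "1 \<le> k" and n: "0 < n" and rule: "is_EWM_rule n e Ghat"
    and meas: "(\<lambda>z. welfare P e (Ghat z)) \<in> borel_measurable (PiM {..<n} (\<lambda>_. P))"
  shows "(\<integral>z. (welfare_star P e - welfare P e (Ghat z)) \<partial>(PiM {..<n} (\<lambda>_. P)))
     \<le> 2 * (2 * real k * (B * sqrt A / sqrt (real n)) + 4 * B * A / real k)"
proof -
  let ?Q = "PiM {..<n} (\<lambda>_. P)"
  interpret Q: prob_space ?Q by (rule prob_space_PiM) (use P in auto)
  have Gh: "\<And>z. Ghat z \<in> monotone_allocs" using rule unfolding is_EWM_rule_def by auto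
  have bnd: "\<And>z. norm (welfare_star P e - welfare P e (Ghat z)) \<le> 2 * B"
    using wstar_bound welf_bound[OF Gh] by (simp add: abs_diff_le_iff) (smt (verit))
  have I: "integrable ?Q (\<lambda>z. welfare_star P e - welfare P e (Ghat z))"
    using bnd meas by (intro Q.integrable_const_bound[where B="2*B"]) auto
  have "(\<integral>z. (welfare_star P e - welfare P e (Ghat z)) \<partial>?Q) \<le> (\<integral>z. 2 * R n k z \<partial>?Q)"
    using I expect_R(1)[OF k n] regret_pw[OF k rule] by (intro integral_mono) auto
  also have "\<dots> = 2 * (\<integral>z. R n k z \<partial>?Q)" by simp
  also have "\<dots> \<le> 2 * (2 * real k * (B * sqrt A / sqrt (real n)) + 4 * B * A / real k)"
    using expect_R(2)[OF k n] by simp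
  finally show ?thesis .
qed

end




lemma rate:
  fixes B A :: real and n :: nat
  assumes n: "1 \<le> n" and B: "0 < B" and A: "0 < A"
  defines "k \<equiv> nat \<lfloor>real n powr (1/4)\<rfloor>"
  shows "1 \<le> k" "2 * (2 * real k * (B * sqrt A / sqrt (real n)) + 4 * B * A / real k)
     \<le> (4 * B * sqrt A + 16 * B * A) * real n powr (-1/4)"
proof -
  define t where "t = real n powr (1/4)"
  have t1: "1 \<le> t" unfolding t_def using n by (simp add: ge_one_powr_ge_zero)
  have kt: "real k \<le> t" "t < real k + 1" unfolding k_def t_def[symmetric] using t1
    by (simp_all add: of_nat_nat)
  then show k1: "1 \<le> k" using t1 unfolding k_def t_def by (simp add: le_nat_floor)
  have kp: "0 < real k" using k1 by simp
  have sq: "sqrt (real n) = t^2"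
  proof -
    have tp0: "0 < t" using t1 by simp
    have "t^2 = t powr (real 2)" using tp0 by (simp add: powr_realpow)
    also have "\<dots> = real n powr (1/4 * 2)" unfolding t_def by (simp add: powr_powr)
    finally have "t^2 = real n powr (1/4 * 2)" .
    also have "\<dots> = sqrt (real n)" using n by (simp add: powr_half_sqrt)
    finally show ?thesis by simp
  qed
  have tm: "real n powr (-1/4) = 1 / t" unfolding t_def using n by (simp add: powr_minus_divide)
  have tp: "0 < t" using t1 by simp
  have a1: "real k / t^2 \<le> 1 / t" using kt(1) tp by (simp add: power2_eq_square divide_simps)
  have a2: "1 / real k \<le> 2 / t" using kt kp k1 tp by (simp add: divide_simps)
  have "2 * (2 * real k * (B * sqrt A / sqrt (real n)) + 4 * B * A / real k)
      = 4 * B * sqrt A * (real k / t^2) + 8 * B * A * (1 / real k)" unfolding sq by (simp add: field_simps)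
  also have "\<dots> \<le> 4 * B * sqrt A * (1 / t) + 8 * B * A * (2 / t)"
    using a1 a2 B A by (intro add_mono mult_left_mono) auto
  also have "\<dots> = (4 * B * sqrt A + 16 * B * A) * real n powr (-1/4)" unfolding tm by (simp add: field_simps add_divide_distrib)
  finally show "2 * (2 * real k * (B * sqrt A / sqrt (real n)) + 4 * B * A / real k)
     \<le> (4 * B * sqrt A + 16 * B * A) * real n powr (-1/4)" .
qed

theorem proposition5p2:
  fixes M \<kappa> A :: real
  assumes "0 < M" and "0 < \<kappa>" and "\<kappa> < 1/2" and "0 < A"
  shows "\<exists>C. \<forall>\<^sub>F n in sequentially.
           \<forall>P e Ghat. admissible M \<kappa> A P e \<longrightarrow> is_EWM_rule n e Ghat \<longrightarrow>
             (\<lambda>z. welfare P e (Ghat z)) \<in> borel_measurable (PiM {..<n} (\<lambda>_. P)) \<longrightarrow>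
             (\<integral>z. (welfare_star P e - welfare P e (Ghat z)) \<partial>(PiM {..<n} (\<lambda>_. P)))
               \<le> C * real n powr (-1/4)"
proof -
  define Bc where "Bc = M / (2 * \<kappa>)"
  have Bcp: "0 < Bc" unfolding Bc_def using assms by simp
  show ?thesis
  proof (intro exI[of _ "4 * Bc * sqrt A + 16 * Bc * A"] eventually_sequentiallyI[of 1] allI impI)
    fix n :: nat and P e Ghat
    assume n: "1 \<le> n" and ad: "admissible M \<kappa> A P e" and r: "is_EWM_rule n e Ghat"
      and m: "(\<lambda>z. welfare P e (Ghat z)) \<in> borel_measurable (PiM {..<n} (\<lambda>_. P))"
    interpret adm M \<kappa> A P e using ad assms by unfold_locales auto
    have BcBc: "adm.B M \<kappa> = Bc" by (simp add: adm.B_def[OF adm_axioms] Bc_def)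
    define k where "k = nat \<lfloor>real n powr (1/4)\<rfloor>"
    note rt = rate[OF n Bcp assms(4), folded k_def]
    have "(\<integral>z. (welfare_star P e - welfare P e (Ghat z)) \<partial>(PiM {..<n} (\<lambda>_. P)))
       \<le> 2 * (2 * real k * (Bc * sqrt A / sqrt (real n)) + 4 * Bc * A / real k)"
      using regret_int[OF rt(1) _ r m] n BcBc by simp
    also have "\<dots> \<le> (4 * Bc * sqrt A + 16 * Bc * A) * real n powr (-1/4)" by (rule rt(2))
    finally show "(\<integral>z. (welfare_star P e - welfare P e (Ghat z)) \<partial>(PiM {..<n} (\<lambda>_. P)))
               \<le> (4 * Bc * sqrt A + 16 * Bc * A) * real n powr (-1/4)" .
  qed
qed


end
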